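(* Let $n\ge 2$, $\sigma\in\{0,1\}$, and let $V$, $\Omega$, $\Omega_0$ and the action $\rho$ be as in the context. Let $G$ be a subgroup of $S_n\times O(2)$ such that $V(\rho(g)u)=V(u)$ for all $g\in G$ and $u\in\Omega$, and let $H$ be a subgroup of $G$. Then on each connected component of $$\Omega_0^H=\Omega_0\cap\mathrm{Fix}(H)=\{u\in\Omega_0:\rho(g)u=u\text{ for all }g\in H\}$$ the restriction of $V$ attains a minimum, and every such minimizer $\mathbf a$ is a critical point of $V$ on $\Omega$, i.e. $\nabla V(\mathbf a)=0$.
   Context: For $u=(u_1,\dots,u_n)\in(\mathbb R^2)^n=\mathbb R^{2n}$ let $$V(u)=\sum_{j=1}^{n-1}U(|u_{j+1}-u_j|^2)+\sigma\,U(|u_n-u_1|^2)+\sum_{1\le j<k\le n}W(|u_j-u_k|^2),$$ where $U(x)=x-2x^{1/2}$ and $W\in C^2((0,\infty))$ satisfies $\lim_{x\to0}W(x)=\lim_{x\to0}(-W'(x))=+\infty$ and $\lim_{x\to\infty}W(x)=\lim_{x\to\infty}W'(x)=0$. $V$ is defined on $\Omega=\{u\in\mathbb R^{2n}:u_j\neq u_k\text{ for }j\ne k\}$, and $\Omega_0=\{u\in\Omega:\sum_{j=1}^n u_j=0\}$. The group $S_n$ of permutations of $\{1,\dots,n\}$ and $O(2)=S^1\cup\tilde\kappa S^1$ act on $\mathbb R^{2n}$ by $(\rho(\gamma)u)_j=u_{\gamma(j)}$ for $\gamma\in S_n$, $(\rho(\theta)u)_j=e^{-J\theta}u_j$ for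 $\theta\in S^1$, and $(\rho(\tilde\kappa)u)_j=Ru_j$, where $J=\begin{pmatrix}0&-1\\1&0\end{pmatrix}$ and $R=\begin{pmatrix}1&0\\0&-1\end{pmatrix}$. *)

theory Defs
  imports "HOL-Analysis.Analysis"
begin

text \<open>Configurations u = (u_1,...,u_n) in (R^2)^n are elements of type real^2^'n,
  where the finite type 'n indexes the n points (n = CARD('n)).  The labelling
  1..n of the paper is given by a bijection e from {0..<n} onto 'n
  (u_j of the paper is u $ e (j-1)).\<close>

definition Upot :: "real \<Rightarrow> real" where
  "Upot x = x - 2 * sqrt x"

definition Vpot :: "(nat \<Rightarrow> 'n::finite) \<Rightarrow> real \<Rightarrow> (real \<Rightarrow> real) \<Rightarrow> real^2^'n \<Rightarrow> real" where
  "Vpot e \<sigma> W u =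
     (\<Sum>j<CARD('n) - 1. Upot ((norm (u $ e (Suc j) - u $ e j))\<^sup>2))
     + \<sigma> * Upot ((norm (u $ e (CARD('n) - 1) - u $ e 0))\<^sup>2)
     + (\<Sum>j<CARD('n). \<Sum>k\<in>{Suc j..<CARD('n)}. W ((norm (u $ e j - u $ e k))\<^sup>2))"

definition Omega :: "(real^2^'n::finite) set" where
  "Omega = {u. \<forall>j k. j \<noteq> k \<longrightarrow> u $ j \<noteq> u $ k}"

definition Omega0 :: "(real^2^'n::finite) set" where
  "Omega0 = {u \<in> Omega. (\<Sum>j\<in>UNIV. u $ j) = 0}"

text \<open>S_n x O(2) is realised as pairs (gamma, A) of a permutation gamma of the index
  type and an orthogonal 2x2 matrix A (O(2) = S^1 \<union> kappa S^1 acting on R^2 through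
  e^{-J theta} and R is exactly the group of orthogonal 2x2 matrices).\<close>

definition rho :: "('n::finite \<Rightarrow> 'n) \<times> (real^2^2) \<Rightarrow> real^2^'n \<Rightarrow> real^2^'n" where
  "rho g u = (\<chi> j. snd g *v (u $ fst g j))"

definition SnO2 :: "(('n::finite \<Rightarrow> 'n) \<times> (real^2^2)) set" where
  "SnO2 = {(\<gamma>, A). \<gamma> permutes UNIV \<and> orthogonal_matrix A}"

definition is_subgroup_SnO2 :: "(('n::finite \<Rightarrow> 'n) \<times> (real^2^2)) set \<Rightarrow> bool" where
  "is_subgroup_SnO2 G \<longleftrightarrow>
     G \<subseteq> SnO2 \<and> (id, mat 1) \<in> G \<and>
     (\<forall>g\<in>G. \<forall>h\<in>G. (fst g \<circ> fst h, snd g ** snd h) \<in> G) \<and>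
     (\<forall>g\<in>G. (inv (fst g), matrix_inv (snd g)) \<in> G)"

definition Fix :: "(('n::finite \<Rightarrow> 'n) \<times> (real^2^2)) set \<Rightarrow> (real^2^'n) set" where
  "Fix H = {u. \<forall>g\<in>H. rho g u = u}"

end

theory Submission
  imports Defs
begin



lemma Upot_norm: "Upot ((norm x)\<^sup>2) = (norm x)\<^sup>2 - 2 * norm x"
  by (simp add: Upot_def real_sqrt_abs)

lemma Upot_ge: "x \<ge> 0 \<Longrightarrow> Upot x \<ge> -1"
proof -
  assume "x \<ge> 0"
  then have "x = (sqrt x)\<^sup>2" by simp
  then have "Upot x = (sqrt x - 1)\<^sup>2 - 1" unfolding Upot_def by (simp add: power2_eq_square algebra_simps)
  then show ?thesis by simp
qed

lemma diff_differentiable: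
  fixes p q :: "'n::finite"
  shows "(\<lambda>u::real^2^'n. u $ p - u $ q) differentiable (at u)"
  by (intro differentiable_diff bounded_linear_imp_differentiable bounded_linear_vec_nth)

lemma normdiff_differentiable:
  fixes p q :: "'n::finite"
  assumes "u $ p \<noteq> u $ q"
  shows "(\<lambda>u::real^2^'n. norm (u $ p - u $ q)) differentiable (at u)"
proof -
  have "norm differentiable (at (u $ p - u $ q))" using assms by simp
  then show ?thesis
    by (rule differentiable_compose) (rule diff_differentiable)
qed

lemma termU_diff:
  fixes p q :: "'n::finite"
  assumes "u $ p \<noteq> u $ q"
  shows "(\<lambda>u::real^2^'n. Upot ((norm (u $ p - u $ q))\<^sup>2)) differentiable (at u)"
proof -
  have "norm differentiable (at (u $ p - u $ q))" using assms by simp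
  then have "(\<lambda>u::real^2^'n. norm (u $ p - u $ q)) differentiable (at u)"
    by (rule differentiable_compose) (rule diff_differentiable)
  then show ?thesis unfolding Upot_norm by (intro derivative_intros)
qed

lemma termW_diff:
  fixes p q :: "'n::finite"
  assumes "u $ p \<noteq> u $ q" and "\<forall>x>0. (W has_real_derivative W' x) (at x)"
  shows "(\<lambda>u::real^2^'n. W ((norm (u $ p - u $ q))\<^sup>2)) differentiable (at u)"
proof -
  have pos: "(norm (u $ p - u $ q))\<^sup>2 > 0" using assms by simp
  have "W differentiable (at ((norm (u $ p - u $ q))\<^sup>2))"
    using assms(2) pos by (meson real_differentiable_def differentiableI has_field_derivative_imp_has_derivative)
  then show ?thesis
    by (rule differentiable_compose) (intro differentiable_power normdiff_differentiable assms(1))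
qed

lemma e_neq:
  assumes "inj_on e {..<CARD('n::finite)}" "j < CARD('n)" "k < CARD('n)" "j \<noteq> k"
  shows "(e j :: 'n) \<noteq> e k"
  using assms by (meson inj_on_def lessThan_iff)

lemma Vpot_differentiable:
  fixes e :: "nat \<Rightarrow> 'n::finite"
  assumes inj: "inj_on e {..<CARD('n)}" and n2: "CARD('n) \<ge> 2" and u: "u \<in> Omega"
    and Wd: "\<forall>x>0. (W has_real_derivative W' x) (at x)"
  shows "Vpot e \<sigma> W differentiable (at u)"
proof -
  have neq: "u $ e j \<noteq> u $ e k" if "j < CARD('n)" "k < CARD('n)" "j \<noteq> k" for j k
    using u e_neq[OF inj that] unfolding Omega_def by auto
  show ?thesis
    unfolding Vpot_def[abs_def]
  proof (intro differentiable_add differentiable_mult differentiable_const differentiable_sum ballI finite_lessThan finite_atLeastLessThan)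
    fix j assume "j \<in> {..<CARD('n) - 1}"
    then show "(\<lambda>u::real^2^'n. Upot ((norm (u $ e (Suc j) - u $ e j))\<^sup>2)) differentiable at u"
      by (intro termU_diff neq) auto
  next
    show "(\<lambda>u::real^2^'n. Upot ((norm (u $ e (CARD('n) - 1) - u $ e 0))\<^sup>2)) differentiable at u"
      using n2 by (intro termU_diff neq) auto
  next
    fix j k assume "j \<in> {..<CARD('n)}" "k \<in> {Suc j..<CARD('n)}"
    then show "(\<lambda>u::real^2^'n. W ((norm (u $ e j - u $ e k))\<^sup>2)) differentiable at u"
      by (intro termW_diff[OF _ Wd] neq) auto
  qed
qed

lemma orth_inner:
  assumes "orthogonal_matrix (A::real^2^2)"
  shows "(A *v x) \<bullet> (A *v y) = x \<bullet> y"
proof -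
  have "orthogonal_transformation ((*v) A)"
    using assms by (simp add: orthogonal_transformation_matrix)
  then show ?thesis by (simp add: orthogonal_transformation_def)
qed

lemma rho_inner:
  assumes "fst g permutes UNIV" "orthogonal_matrix (snd g)"
  shows "rho g x \<bullet> rho g y = (x::real^2^'n::finite) \<bullet> y"
proof -
  have "rho g x \<bullet> rho g y = (\<Sum>j\<in>UNIV. x $ fst g j \<bullet> y $ fst g j)"
    by (subst inner_vec_def) (simp add: rho_def orth_inner[OF assms(2)])
  also have "\<dots> = (\<Sum>j\<in>UNIV. x $ j \<bullet> y $ j)"
    using sum.reindex_bij_betw[OF permutes_imp_bij[OF assms(1)], of "\<lambda>j. x $ j \<bullet> y $ j"] by simp
  finally show ?thesis by (subst inner_vec_def) simp
qed

lemma rho_add: "rho g (x + y) = rho g x + rho g y"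
  by (simp add: rho_def vec_eq_iff matrix_vector_right_distrib)

lemma rho_scale: "rho g (c *\<^sub>R x) = c *\<^sub>R rho g x"
  by (simp add: rho_def vec_eq_iff matrix_vector_mult_scaleR)

lemma rho_linear: "linear (rho g)"
  by (rule linearI) (simp_all add: rho_add rho_scale)

lemma rho_bounded_linear: "bounded_linear (rho g :: real^2^'n::finite \<Rightarrow> _)"
  using rho_linear linear_conv_bounded_linear by blast

lemma rho_zero: "rho g 0 = 0"
  using linear_0[OF rho_linear] .

lemma open_Omega: "open (Omega :: (real^2^'n::finite) set)"
proof -
  have "Omega = (\<Inter>p\<in>(UNIV::'n set). \<Inter>q\<in>UNIV - {p}. {u::real^2^'n. u $ p \<noteq> u $ q})"
    unfolding Omega_def by auto
  also have "open \<dots>"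
    by (intro open_INT finite_Diff ballI open_Collect_neq continuous_intros) simp_all
  finally show ?thesis .
qed

definition Ssp :: "(('n::finite \<Rightarrow> 'n) \<times> (real^2^2)) set \<Rightarrow> (real^2^'n) set" where
  "Ssp H = {u. (\<Sum>j\<in>UNIV. u $ j) = 0 \<and> (\<forall>g\<in>H. rho g u = u)}"

lemma Omega0_Fix: "Omega0 \<inter> Fix H = Omega \<inter> Ssp H"
  unfolding Omega0_def Fix_def Ssp_def by auto

lemma subspace_Ssp: "subspace (Ssp H)"
  unfolding subspace_def Ssp_def
  by (auto simp: rho_zero rho_add rho_scale sum.distrib scaleR_sum_right[symmetric])

lemma closed_Ssp: "closed (Ssp H)"
proof -
  have "Ssp H = {u. (\<Sum>j\<in>UNIV. u $ j) = 0} \<inter> (\<Inter>g\<in>H. {u. rho g u = u})"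
    unfolding Ssp_def by auto
  also have "closed \<dots>"
    by (intro closed_Int closed_INT ballI closed_Collect_eq continuous_intros
          linear_continuous_on rho_bounded_linear)
  finally show ?thesis .
qed

lemma W_lower:
  assumes Wd: "\<forall>x>0. (W has_real_derivative W' x) (at x)"
    and W0: "filterlim W at_top (at_right 0)"
    and Winf: "(W \<longlongrightarrow> 0) at_top"
  shows "\<exists>m. \<forall>x>0. m \<le> W x"
proof -
  have "eventually (\<lambda>x. 0 \<le> W x) (at_right (0::real))"
    using W0 by (simp add: filterlim_at_top)
  then obtain b where b: "b > 0" "\<forall>y>0. y < b \<longrightarrow> 0 \<le> W y"
    by (auto simp: eventually_at_right_field)
  have "eventually (\<lambda>x. -1 < W x) at_top"
    using Winf by (rule order_tendstoD) simp
  then obtain R where R: "\<forall>x\<ge>R. -1 < W x"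
    by (auto simp: eventually_at_top_linorder)
  have "continuous_on {b..max b R} W"
  proof (intro continuous_at_imp_continuous_on ballI)
    fix x assume "x \<in> {b..max b R}"
    then have "x > 0" using b by auto
    then show "isCont W x" using Wd DERIV_isCont by blast
  qed
  then obtain x0 where x0: "x0 \<in> {b..max b R}" "\<forall>y\<in>{b..max b R}. W x0 \<le> W y"
    using continuous_attains_inf[of "{b..max b R}" W] by auto
  show ?thesis
  proof (intro exI allI impI)
    fix x :: real assume "x > 0"
    show "min (-1) (W x0) \<le> W x"
    proof (cases "x < b")
      case True then show ?thesis using b \<open>x>0\<close> by force
    next
      case False
      show ?thesis
      proof (cases "x \<le> max b R")
        case True
        then have "W x0 \<le> W x" using x0(2) False by auto
        then show ?thesis by linarith
      next
        case False2: False
        then have "-1 < W x" using R by auto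
        then show ?thesis by linarith
      qed
    qed
  qed
qed

lemma sum_ge_one:
  fixes f :: "'a \<Rightarrow> real"
  assumes "finite S" "i \<in> S" "\<And>j. j \<in> S \<Longrightarrow> -K \<le> f j" "K \<ge> 0"
  shows "f i - K * card S \<le> sum f S"
proof -
  have "sum f S = f i + sum f (S - {i})" using assms by (simp add: sum.remove)
  moreover have "of_nat (card (S - {i})) * (-K) \<le> sum f (S - {i})"
    using assms by (intro sum_bounded_below) auto
  then have "- (K * card (S - {i})) \<le> sum f (S - {i})" by (simp add: mult.commute)
  moreover have "card (S - {i}) \<le> card S" using assms by (simp add: card_Diff_subset)
  then have "K * card (S - {i}) \<le> K * card S" using assms(4) by (intro mult_left_mono) auto
  ultimately show ?thesis by linarith
qed

lemma sum_ge_all: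
  fixes f :: "'a \<Rightarrow> real"
  assumes "card S \<le> N" "\<And>j. j \<in> S \<Longrightarrow> -K \<le> f j" "K \<ge> 0"
  shows "- K * N \<le> sum f S"
proof -
  have "of_nat (card S) * (-K) \<le> sum f S"
    using assms by (intro sum_bounded_below) auto
  then have "- (K * card S) \<le> sum f S" by (simp add: mult.commute)
  moreover have "K * real (card S) \<le> K * real N" using assms by (intro mult_left_mono) auto
  ultimately show ?thesis by simp
qed

lemma V_lower:
  fixes e :: "nat \<Rightarrow> 'n::finite" and m :: real and W :: "real \<Rightarrow> real"
  assumes inj: "inj_on e {..<CARD('n)}" and sig: "\<sigma> = 0 \<or> \<sigma> = 1"
    and m: "\<forall>x>0. m \<le> W x" and u: "u \<in> Omega"
  shows "\<forall>j. j < CARD('n) - 1 \<longrightarrow> Upot ((norm (u $ e (Suc j) - u $ e j))\<^sup>2)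
            - (3 * max 1 (-m) * CARD('n) + max 1 (-m) + max 1 (-m) * CARD('n) * CARD('n)) \<le> Vpot e \<sigma> W u"
    and "\<forall>j k. j < k \<longrightarrow> k < CARD('n) \<longrightarrow> W ((norm (u $ e j - u $ e k))\<^sup>2)
            - (3 * max 1 (-m) * CARD('n) + max 1 (-m) + max 1 (-m) * CARD('n) * CARD('n)) \<le> Vpot e \<sigma> W u"
proof -
  define K where "K = max 1 (-m)"
  define N where "N = CARD('n)"
  have K1: "K \<ge> 1" unfolding K_def by simp
  have Uterm: "-K \<le> Upot x" if "x \<ge> 0" for x using Upot_ge[OF that] K1 by linarith
  have Wterm: "-K \<le> W ((norm (u $ e j - u $ e k))\<^sup>2)" if "j < k" "k < N" for j k
  proof -
    have "u $ e j \<noteq> u $ e k" using u e_neq[OF inj, of j k] that unfolding Omega_def N_def by auto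
    then have "m \<le> W ((norm (u $ e j - u $ e k))\<^sup>2)" using m by simp
    then show ?thesis unfolding K_def by linarith
  qed
  define A where "A = (\<Sum>j<N - 1. Upot ((norm (u $ e (Suc j) - u $ e j))\<^sup>2))"
  define Sg where "Sg = \<sigma> * Upot ((norm (u $ e (N - 1) - u $ e 0))\<^sup>2)"
  define I where "I = (\<lambda>j. \<Sum>k\<in>{Suc j..<N}. W ((norm (u $ e j - u $ e k))\<^sup>2))"
  define C where "C = (\<Sum>j<N. I j)"
  have V: "Vpot e \<sigma> W u = A + Sg + C"
    unfolding Vpot_def A_def Sg_def C_def I_def N_def by simp
  have A_all: "- K * N \<le> A"
    unfolding A_def using K1 by (intro sum_ge_all Uterm) auto
  have Sg: "-K \<le> Sg"
    using sig Uterm[of "(norm (u $ e (N - 1) - u $ e 0))\<^sup>2"] K1 unfolding Sg_def by auto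
  have I_all: "- K * N \<le> I j" if "j < N" for j
    unfolding I_def using K1 by (intro sum_ge_all Wterm) auto
  have C_all: "- (K * N) * N \<le> C"
    unfolding C_def using K1 I_all by (intro sum_ge_all) auto
  have KN: "0 \<le> K * N" using K1 by simp
  show "\<forall>j. j < CARD('n) - 1 \<longrightarrow> Upot ((norm (u $ e (Suc j) - u $ e j))\<^sup>2)
            - (3 * max 1 (-m) * CARD('n) + max 1 (-m) + max 1 (-m) * CARD('n) * CARD('n)) \<le> Vpot e \<sigma> W u"
  proof (intro allI impI)
    fix j assume j: "j < CARD('n) - 1"
    have "Upot ((norm (u $ e (Suc j) - u $ e j))\<^sup>2) - K * card {..<N - 1} \<le> A"
      unfolding A_def using j K1 by (intro sum_ge_one Uterm) (auto simp: N_def)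
    moreover have "K * card {..<N - 1} \<le> K * N" using K1 by (intro mult_left_mono) auto
    ultimately show "Upot ((norm (u $ e (Suc j) - u $ e j))\<^sup>2)
            - (3 * max 1 (-m) * CARD('n) + max 1 (-m) + max 1 (-m) * CARD('n) * CARD('n)) \<le> Vpot e \<sigma> W u"
      using V Sg C_all KN unfolding K_def[symmetric] N_def[symmetric] by (simp add: algebra_simps)
  qed
  show "\<forall>j k. j < k \<longrightarrow> k < CARD('n) \<longrightarrow> W ((norm (u $ e j - u $ e k))\<^sup>2)
            - (3 * max 1 (-m) * CARD('n) + max 1 (-m) + max 1 (-m) * CARD('n) * CARD('n)) \<le> Vpot e \<sigma> W u"
  proof (intro allI impI)
    fix j k assume jk: "j < k" "k < CARD('n)"
    have "W ((norm (u $ e j - u $ e k))\<^sup>2) - K * card {Suc j..<N} \<le> I j"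
      unfolding I_def using jk K1 by (intro sum_ge_one Wterm) (auto simp: N_def)
    moreover have "K * card {Suc j..<N} \<le> K * N" using K1 by (intro mult_left_mono) auto
    moreover have "I j - (K * N) * card {..<N} \<le> C"
      unfolding C_def using jk K1 I_all by (intro sum_ge_one) (auto simp: N_def)
    ultimately show "W ((norm (u $ e j - u $ e k))\<^sup>2)
            - (3 * max 1 (-m) * CARD('n) + max 1 (-m) + max 1 (-m) * CARD('n) * CARD('n)) \<le> Vpot e \<sigma> W u"
      using V Sg A_all KN unfolding K_def[symmetric] N_def[symmetric] by (simp add: algebra_simps)
  qed
qed




lemma Upot_bound:
  assumes "Upot ((norm x)\<^sup>2) \<le> M"
  shows "norm x \<le> \<bar>M\<bar> + 2"
proof (rule ccontr)
  assume "\<not> ?thesis"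
  then have h: "norm x > \<bar>M\<bar> + 2" by simp
  have "(norm x)\<^sup>2 - 2 * norm x \<le> M" using assms by (simp add: Upot_norm)
  moreover have "norm x * (norm x - 2) > (\<bar>M\<bar> + 2) * \<bar>M\<bar>"
    using h by (intro mult_strict_mono') auto
  moreover have "(norm x)\<^sup>2 - 2 * norm x = norm x * (norm x - 2)"
    by (simp add: power2_eq_square algebra_simps)
  moreover have "(\<bar>M\<bar> + 2) * \<bar>M\<bar> \<ge> \<bar>M\<bar>"
    by (simp add: algebra_simps)
  ultimately show False by linarith
qed

lemma norm_le_sum_components:
  fixes u :: "real^2^'n::finite"
  shows "norm u \<le> (\<Sum>p\<in>UNIV. norm (u $ p))"
  unfolding norm_vec_def by (rule L2_set_le_sum) simp

lemma coercive:
  fixes e :: "nat \<Rightarrow> 'n::finite" and W :: "real \<Rightarrow> real" and m c :: real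
  assumes e_bij: "bij_betw e {..<CARD('n)} UNIV" and sig: "\<sigma> = 0 \<or> \<sigma> = 1"
    and m: "\<forall>x>0. m \<le> W x" and W0: "filterlim W at_top (at_right 0)"
  shows "\<exists>\<delta>>0. \<exists>R. \<forall>u\<in>Omega. Vpot e \<sigma> W u \<le> c \<longrightarrow>
           (\<forall>p q. p \<noteq> q \<longrightarrow> \<delta> \<le> (norm (u $ p - u $ q))\<^sup>2) \<and>
           ((\<Sum>j\<in>UNIV. u $ j) = 0 \<longrightarrow> norm u \<le> R)"
proof -
  define N where "N = CARD('n)"
  define B where "B = 3 * max 1 (-m) * CARD('n) + max 1 (-m) + max 1 (-m) * CARD('n) * CARD('n)"
  define M where "M = c + B"
  define D where "D = \<bar>M\<bar> + 2"
  have D0: "D \<ge> 0" unfolding D_def by simp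
  have inj: "inj_on e {..<CARD('n)}" using e_bij bij_betw_def by blast
  have surj: "e ` {..<N} = UNIV" using e_bij unfolding N_def bij_betw_def by blast
  have N0: "N > 0" unfolding N_def by simp
  have "eventually (\<lambda>x. M + 1 \<le> W x) (at_right (0::real))"
    using W0 by (simp add: filterlim_at_top)
  then obtain b where b: "b > 0" "\<forall>y>0. y < b \<longrightarrow> M + 1 \<le> W y"
    by (auto simp: eventually_at_right_field)
  define R where "R = real N * (2 * real N * D)"
  show ?thesis
  proof (rule exI[of _ b], intro conjI b(1) exI[of _ R] ballI impI allI)
    fix u :: "real^2^'n" assume u: "u \<in> Omega" and Vc: "Vpot e \<sigma> W u \<le> c"
    note VL = V_lower[OF inj sig m u]
    have Wb: "W ((norm (u $ e j - u $ e k))\<^sup>2) \<le> M" if "j < k" "k < N" for j k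
      using VL(2)[rule_format, of j k] that Vc unfolding M_def B_def N_def by linarith
    have Ub: "norm (u $ e (Suc j) - u $ e j) \<le> D" if "j < N - 1" for j
    proof -
      have "Upot ((norm (u $ e (Suc j) - u $ e j))\<^sup>2) \<le> M"
        using VL(1)[rule_format, of j] that Vc unfolding M_def B_def N_def by linarith
      then show ?thesis unfolding D_def by (rule Upot_bound)
    qed
    {
      fix p q :: 'n assume pq: "p \<noteq> q"
      obtain j where j: "j < N" "e j = p" using surj by (metis UNIV_I imageE lessThan_iff)
      obtain k where k: "k < N" "e k = q" using surj by (metis UNIV_I imageE lessThan_iff)
      have jk: "j \<noteq> k" using pq j k by auto
      have Wpq: "W ((norm (u $ p - u $ q))\<^sup>2) \<le> M"
      proof (cases "j < k")
        case True then show ?thesis using Wb[of j k] j k by simp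
      next
        case False then have "k < j" using jk by simp
        then show ?thesis using Wb[of k j] j k by (simp add: norm_minus_commute)
      qed
      have pos: "(norm (u $ p - u $ q))\<^sup>2 > 0" using u pq unfolding Omega_def by auto
      show "b \<le> (norm (u $ p - u $ q))\<^sup>2"
      proof (rule ccontr)
        assume "\<not> ?thesis"
        then have "M + 1 \<le> W ((norm (u $ p - u $ q))\<^sup>2)" using b pos by simp
        then show False using Wpq by simp
      qed
    }
    assume sum0: "(\<Sum>j\<in>UNIV. u $ j) = 0"
    have chain: "norm (u $ e j - u $ e 0) \<le> j * D" if "j < N" for j
      using that
    proof (induction j)
      case 0 then show ?case by simp
    next
      case (Suc j)
      have "norm (u $ e (Suc j) - u $ e 0) \<le> norm (u $ e (Suc j) - u $ e j) + norm (u $ e j - u $ e 0)"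
        using norm_triangle_ineq[of "u $ e (Suc j) - u $ e j" "u $ e j - u $ e 0"] by simp
      also have "\<dots> \<le> D + j * D" using Suc Ub[of j] by (intro add_mono) auto
      finally show ?case by (simp add: algebra_simps)
    qed
    have alld: "norm (u $ p - u $ q) \<le> 2 * N * D" for p q
    proof -
      obtain j where j: "j < N" "e j = p" using surj by (metis UNIV_I imageE lessThan_iff)
      obtain k where k: "k < N" "e k = q" using surj by (metis UNIV_I imageE lessThan_iff)
      have "norm (u $ p - u $ q) \<le> norm (u $ e j - u $ e 0) + norm (u $ e k - u $ e 0)"
        using norm_triangle_ineq4[of "u $ e j - u $ e 0" "u $ e k - u $ e 0"] j k by simp
      also have "\<dots> \<le> j * D + k * D" using chain j k by (intro add_mono) auto
      also have "\<dots> \<le> N * D + N * D" using j k D0 by (intro add_mono mult_right_mono) auto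
      finally show ?thesis by (simp add: algebra_simps)
    qed
    have comp: "norm (u $ p) \<le> 2 * N * D" for p
    proof -
      have "(\<Sum>q\<in>UNIV. u $ p - u $ q) = real N *\<^sub>R u $ p"
        using sum0 unfolding sum_subtractf N_def by (simp only: sum_constant_scaleR) simp
      then have "real N * norm (u $ p) = norm (\<Sum>q\<in>UNIV. u $ p - u $ q)" by simp
      also have "\<dots> \<le> (\<Sum>q\<in>UNIV. norm (u $ p - u $ q))" by (rule norm_sum)
      also have "\<dots> \<le> (\<Sum>q\<in>(UNIV::'n set). 2 * N * D)" by (intro sum_mono alld)
      also have "\<dots> = real N * (2 * N * D)" by (simp add: N_def)
      finally show ?thesis using N0 by simp
    qed
    have "norm u \<le> (\<Sum>p\<in>UNIV. norm (u $ p))" by (rule norm_le_sum_components)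
    also have "\<dots> \<le> (\<Sum>p\<in>(UNIV::'n set). 2 * N * D)" by (intro sum_mono comp)
    also have "\<dots> = R" by (simp add: N_def R_def)
    finally show "norm u \<le> R" .
  qed
qed




lemma dir_min:
  fixes f :: "'a::real_normed_vector \<Rightarrow> real"
  assumes deriv: "(f has_derivative D) (at a)"
    and ev: "eventually (\<lambda>t. f a \<le> f (a + t *\<^sub>R v)) (at (0::real))"
  shows "D v = 0"
proof -
  have l: "((\<lambda>t::real. a + t *\<^sub>R v) has_derivative (\<lambda>t. t *\<^sub>R v)) (at 0)"
    by (intro derivative_eq_intros) auto
  have d2: "(f has_derivative D) (at (a + 0 *\<^sub>R v))" using deriv by simp
  have "((\<lambda>t. f (a + t *\<^sub>R v)) has_derivative (\<lambda>t. D (t *\<^sub>R v))) (at 0)"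
    by (rule has_derivative_compose[OF l d2])
  moreover have "eventually (\<lambda>t. f (a + 0 *\<^sub>R v) \<le> f (a + t *\<^sub>R v)) (at (0::real))"
    using ev by simp
  ultimately have "(\<lambda>t. D (t *\<^sub>R v)) = (\<lambda>h. 0)"
    by (rule has_derivative_local_min)
  then have "D (1 *\<^sub>R v) = 0" by (metis (mono_tags))
  then show ?thesis by simp
qed

lemma Vpot_translate:
  "Vpot e \<sigma> W (u + (\<chi> j. c)) = Vpot e \<sigma> W u"
  by (simp add: Vpot_def)

lemma closed_K:
  "closed ({u::real^2^'n::finite. (\<forall>p q. p \<noteq> q \<longrightarrow> \<delta> \<le> (norm (u $ p - u $ q))\<^sup>2) \<and> norm u \<le> R} \<inter> Ssp H)"
proof -
  have "{u::real^2^'n::finite. (\<forall>p q. p \<noteq> q \<longrightarrow> \<delta> \<le> (norm (u $ p - u $ q))\<^sup>2) \<and> norm u \<le> R}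
     = (\<Inter>p. \<Inter>q\<in>UNIV - {p}. {u. \<delta> \<le> (norm (u $ p - u $ q))\<^sup>2}) \<inter> {u. norm u \<le> R}"
    by auto
  also have "closed \<dots>"
    by (intro closed_Int closed_INT ballI closed_Collect_le continuous_intros)
  finally show ?thesis by (intro closed_Int closed_Ssp)
qed




theorem theorem1:
  fixes e :: "nat \<Rightarrow> 'n::finite"
    and \<sigma> :: real
    and W W' W'' :: "real \<Rightarrow> real"
    and G H :: "(('n \<Rightarrow> 'n) \<times> (real^2^2)) set"
  assumes n2: "CARD('n) \<ge> 2"
    and e_bij: "bij_betw e {..<CARD('n)} UNIV"
    and sigma: "\<sigma> = 0 \<or> \<sigma> = 1"
    and W_deriv: "\<forall>x>0. (W has_real_derivative W' x) (at x)"
    and W'_deriv: "\<forall>x>0. (W' has_real_derivative W'' x) (at x)"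
    and W''_cont: "continuous_on {0<..} W''"
    and W_lim0: "filterlim W at_top (at_right 0)"
    and W'_lim0: "filterlim (\<lambda>x. - W' x) at_top (at_right 0)"
    and W_liminf: "(W \<longlongrightarrow> 0) at_top"
    and W'_liminf: "(W' \<longlongrightarrow> 0) at_top"
    and G_sub: "is_subgroup_SnO2 G"
    and G_inv: "\<forall>g\<in>G. \<forall>u\<in>Omega. Vpot e \<sigma> W (rho g u) = Vpot e \<sigma> W u"
    and H_sub: "is_subgroup_SnO2 H" "H \<subseteq> G"
  shows "\<forall>C \<in> components (Omega0 \<inter> Fix H).
           (\<exists>a\<in>C. \<forall>u\<in>C. Vpot e \<sigma> W a \<le> Vpot e \<sigma> W u) \<and>
           (\<forall>a\<in>C. (\<forall>u\<in>C. Vpot e \<sigma> W a \<le> Vpot e \<sigma> W u) \<longrightarrow>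
                   (Vpot e \<sigma> W has_derivative (\<lambda>h. 0)) (at a))"
proof
  fix C assume C0: "C \<in> components (Omega0 \<inter> Fix H)"
  define V where "V = Vpot e \<sigma> W"
  define S where "S = Ssp H"
  define Y where "Y = Omega \<inter> S"
  have inj: "inj_on e {..<CARD('n)}" using e_bij bij_betw_def by blast
  have diff: "V differentiable (at u)" if "u \<in> Omega" for u
    unfolding V_def using Vpot_differentiable[OF inj n2 that W_deriv] .
  have cont: "continuous_on Omega V"
    using diff by (intro continuous_at_imp_continuous_on ballI differentiable_imp_continuous_within) auto
  obtain m where m: "\<forall>x>0. m \<le> W x" using W_lower[OF W_deriv W_lim0 W_liminf] by blast
  have Hp: "fst g permutes UNIV \<and> orthogonal_matrix (snd g)" if "g \<in> H" for g
    using H_sub(1) that unfolding is_subgroup_SnO2_def SnO2_def by auto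
  have CY: "C \<in> components Y" using C0 unfolding Y_def S_def Omega0_Fix .
  have CsubY: "C \<subseteq> Y" using CY in_components_subset by blast
  have part1: "\<exists>a\<in>C. \<forall>u\<in>C. V a \<le> V u"
  proof -
    obtain u0 where u0: "u0 \<in> C" using in_components_nonempty[OF CY] by blast
    define c where "c = V u0"
    have "\<exists>\<delta>>0. \<exists>R. \<forall>u\<in>Omega. V u \<le> c \<longrightarrow>
           (\<forall>p q. p \<noteq> q \<longrightarrow> \<delta> \<le> (norm (u $ p - u $ q))\<^sup>2) \<and>
           ((\<Sum>j\<in>UNIV. u $ j) = 0 \<longrightarrow> norm u \<le> R)"
      unfolding V_def by (rule coercive[OF e_bij sigma m W_lim0])
    then obtain \<delta> R where \<delta>: "\<delta> > 0" and co: "\<forall>u\<in>Omega. V u \<le> c \<longrightarrow>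
           (\<forall>p q. p \<noteq> q \<longrightarrow> \<delta> \<le> (norm (u $ p - u $ q))\<^sup>2) \<and>
           ((\<Sum>j\<in>UNIV. u $ j) = 0 \<longrightarrow> norm u \<le> R)"
      by (elim exE conjE) (rule that, assumption+)
    define K where "K = {u::real^2^'n. (\<forall>p q. p \<noteq> q \<longrightarrow> \<delta> \<le> (norm (u $ p - u $ q))\<^sup>2) \<and> norm u \<le> R} \<inter> S"
    have KO: "K \<subseteq> Omega"
    proof
      fix u assume "u \<in> K"
      then have "\<forall>p q. p \<noteq> q \<longrightarrow> \<delta> \<le> (norm (u $ p - u $ q))\<^sup>2" unfolding K_def by auto
      then have "u $ p \<noteq> u $ q" if "p \<noteq> q" for p q
      proof -
        have "\<delta> \<le> (norm (u $ p - u $ q))\<^sup>2" using that \<open>\<forall>p q. p \<noteq> q \<longrightarrow> \<delta> \<le> (norm (u $ p - u $ q))\<^sup>2\<close> by blast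
        then show ?thesis using \<delta> by auto
      qed
      then show "u \<in> Omega" unfolding Omega_def by blast
    qed
    have KY: "K \<subseteq> Y" using KO unfolding Y_def K_def by auto
    have cK: "compact K"
    proof -
      have "closed K" unfolding K_def S_def by (rule closed_K)
      moreover have "bounded K" unfolding bounded_iff K_def by blast
      ultimately show ?thesis by (simp add: compact_eq_bounded_closed)
    qed
    obtain F where F: "closed F" "C = Y \<inter> F"
      using closedin_component[OF CY] closedin_closed by metis
    have CK: "C \<inter> K = F \<inter> K" using F KY by auto
    have cCK: "compact (C \<inter> K)" unfolding CK using F(1) cK by (rule closed_Int_compact)
    have u0S: "u0 \<in> S" "u0 \<in> Omega" using u0 CsubY unfolding Y_def by auto
    have "V u0 \<le> c" by (simp add: c_def)
    then have u0c: "(\<forall>p q. p \<noteq> q \<longrightarrow> \<delta> \<le> (norm (u0 $ p - u0 $ q))\<^sup>2) \<and>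
           ((\<Sum>j\<in>UNIV. u0 $ j) = 0 \<longrightarrow> norm u0 \<le> R)" using co u0S(2) by blast
    have "(\<Sum>j\<in>UNIV. u0 $ j) = 0" using u0S(1) unfolding S_def Ssp_def by blast
    then have u0K: "u0 \<in> K" using u0c u0S(1) unfolding K_def by blast
    have "continuous_on (C \<inter> K) V" using continuous_on_subset[OF cont] KO by blast
    then obtain a where a: "a \<in> C \<inter> K" "\<forall>y\<in>C \<inter> K. V a \<le> V y"
      using continuous_attains_inf[OF cCK _] u0 u0K by blast
    show ?thesis
    proof (intro bexI[of _ a] ballI)
      show "a \<in> C" using a by auto
      fix u assume u: "u \<in> C"
      show "V a \<le> V u"
      proof (cases "u \<in> K")
        case True then show ?thesis using a u by auto
      next
        case False
        have uS: "u \<in> S" "u \<in> Omega" using u CsubY unfolding Y_def by auto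
        have "\<not> V u \<le> c"
        proof
          assume "V u \<le> c"
          then have uc: "(\<forall>p q. p \<noteq> q \<longrightarrow> \<delta> \<le> (norm (u $ p - u $ q))\<^sup>2) \<and>
           ((\<Sum>j\<in>UNIV. u $ j) = 0 \<longrightarrow> norm u \<le> R)" using co uS(2) by blast
          have "(\<Sum>j\<in>UNIV. u $ j) = 0" using uS(1) unfolding S_def Ssp_def by blast
          then have "u \<in> K" using uc uS(1) unfolding K_def by blast
          then show False using False by simp
        qed
        moreover have "V a \<le> c" using a u0 u0K unfolding c_def by auto
        ultimately show ?thesis by linarith
      qed
    qed
  qed
  have part2: "(V has_derivative (\<lambda>h. 0)) (at a)" if aC: "a \<in> C" and amin: "\<forall>u\<in>C. V a \<le> V u" for a
  proof -
    have aO: "a \<in> Omega" and aS: "a \<in> S" using aC CsubY unfolding Y_def by auto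
    obtain D where hD: "(V has_derivative D) (at a)" using diff[OF aO] unfolding differentiable_def by blast
    have lin: "linear D" using hD has_derivative_linear by blast
    obtain \<epsilon> where \<epsilon>: "\<epsilon> > 0" "ball a \<epsilon> \<subseteq> Omega" using open_Omega aO open_contains_ball by blast
    have subS: "subspace S" unfolding S_def by (rule subspace_Ssp)
    have ballC: "ball a \<epsilon> \<inter> S \<subseteq> C"
    proof (rule components_maximal[OF CY])
      show "connected (ball a \<epsilon> \<inter> S)"
        by (intro convex_connected convex_Int convex_ball subspace_imp_convex subS)
      show "ball a \<epsilon> \<inter> S \<subseteq> Y" using \<epsilon> unfolding Y_def by auto
      show "C \<inter> (ball a \<epsilon> \<inter> S) \<noteq> {}" using aC aS \<epsilon> by auto
    qed
    have dirS: "D v = 0" if vS: "v \<in> S" for v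
    proof (rule dir_min[OF hD])
      show "eventually (\<lambda>t. V a \<le> V (a + t *\<^sub>R v)) (at (0::real))"
        unfolding eventually_at
      proof (intro exI[of _ "\<epsilon> / (norm v + 1)"] conjI ballI impI)
        have nv: "norm v + 1 > 0" using norm_ge_zero[of v] by linarith
        show "\<epsilon> / (norm v + 1) > 0" using \<epsilon>(1) nv by (rule divide_pos_pos)
        fix t :: real assume t: "t \<noteq> 0 \<and> dist t 0 < \<epsilon> / (norm v + 1)"
        have "\<bar>t\<bar> * norm v \<le> \<bar>t\<bar> * (norm v + 1)" by (simp add: mult_left_mono)
        also have "\<dots> < \<epsilon>" using t nv by (simp add: pos_less_divide_eq)
        finally have "dist a (a + t *\<^sub>R v) < \<epsilon>" by (simp add: dist_norm)
        moreover have "a + t *\<^sub>R v \<in> S"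
          using subS aS vS by (simp add: subspace_add subspace_scale)
        ultimately have "a + t *\<^sub>R v \<in> C" using ballC by auto
        then show "V a \<le> V (a + t *\<^sub>R v)" using amin by blast
      qed
    qed
    have dirT: "D (\<chi> j. c) = 0" for c :: "real^2"
    proof (rule dir_min[OF hD])
      have "V (a + t *\<^sub>R (\<chi> j. c)) = V a" for t
      proof -
        have "a + t *\<^sub>R (\<chi> j. c) = a + (\<chi> j. t *\<^sub>R c)" by (simp add: vec_eq_iff)
        then show ?thesis unfolding V_def by (simp add: Vpot_translate)
      qed
      then show "eventually (\<lambda>t. V a \<le> V (a + t *\<^sub>R (\<chi> j. c))) (at (0::real))" by simp
    qed
    have dirH: "D (rho g x) = D x" if gH: "g \<in> H" for g x
    proof -
      have ga: "rho g a = a" using aS gH unfolding S_def Ssp_def by auto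
      have r: "(rho g has_derivative rho g) (at a)"
        by (rule bounded_linear_imp_has_derivative[OF rho_bounded_linear])
      have "(V has_derivative D) (at (rho g a))" using hD ga by simp
      from has_derivative_compose[OF r this]
      have "((\<lambda>u. V (rho g u)) has_derivative (\<lambda>x. D (rho g x))) (at a)" .
      then have "(V has_derivative (\<lambda>x. D (rho g x))) (at a)"
      proof (rule has_derivative_transform_within_open[OF _ open_Omega aO])
        fix u :: "real^2^'n" assume "u \<in> Omega"
        then show "V (rho g u) = V u" using G_inv H_sub(2) gH unfolding V_def by blast
      qed
      from has_derivative_unique[OF this hD] show ?thesis by metis
    qed
    define w where "w = adjoint D 1"
    have Dw: "D x = x \<bullet> w" for x
      using adjoint_works[OF lin, of x 1] unfolding w_def by simp
    have wS: "w \<in> S"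
    proof -
      define s where "s = (\<Sum>j\<in>UNIV. w $ j)"
      have "(\<chi> j. s) \<bullet> w = 0" using dirT[of s] Dw by simp
      moreover have "(\<chi> j. s) \<bullet> w = s \<bullet> s"
        by (subst inner_vec_def) (simp add: s_def inner_sum_right)
      ultimately have s0: "s = 0" by simp
      have fix_w: "rho g w = w" if gH: "g \<in> H" for g
      proof -
        have i1: "rho g w \<bullet> rho g w = w \<bullet> w" using rho_inner Hp[OF gH] by blast
        have i2: "rho g w \<bullet> w = w \<bullet> w" using dirH[OF gH, of w] Dw by simp
        have "(rho g w - w) \<bullet> (rho g w - w) = 0"
          using i1 i2 by (simp add: inner_diff_left inner_diff_right inner_commute)
        then show ?thesis by simp
      qed
      show ?thesis unfolding S_def Ssp_def using s0 fix_w s_def by auto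
    qed
    have "w \<bullet> w = 0" using dirS[OF wS] Dw by simp
    then have "w = 0" by simp
    then have "D = (\<lambda>h. 0)" using Dw by (simp add: fun_eq_iff)
    then show ?thesis using hD by simp
  qed
  show "(\<exists>a\<in>C. \<forall>u\<in>C. Vpot e \<sigma> W a \<le> Vpot e \<sigma> W u) \<and>
           (\<forall>a\<in>C. (\<forall>u\<in>C. Vpot e \<sigma> W a \<le> Vpot e \<sigma> W u) \<longrightarrow>
                   (Vpot e \<sigma> W has_derivative (\<lambda>h. 0)) (at a))"
    using part1 part2 unfolding V_def by blast
qed


end
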